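(* Let $\|\cdot\|$ be any submultiplicative matrix norm on the algebra $M_n(\mathbb C)$ of complex $n\times n$ matrices. For $C\ge1$ and $N\in\mathbb N$ put $r^N_C(x)=C\cdot\max\{\|x\|,\|x^{-1}\|\}^N$, $x\in\mathrm{GL}_n(\mathbb C)$. Then the functions $r^N_C$ majorize all semicharacters on $\mathrm{GL}_n(\mathbb C)$: for every semicharacter $f$ on $\mathrm{GL}_n(\mathbb C)$ there exist $C\ge1$ and $N\in\mathbb N$ with $f(x)\le r^N_C(x)$ for all $x\in\mathrm{GL}_n(\mathbb C)$.
   Context: A semicharacter on a complex Lie group $G$ is a locally bounded function $f:G\to[1,+\infty)$ satisfying $f(xy)\le f(x)f(y)$ for all $x,y\in G$. A matrix norm $\|\cdot\|$ is submultiplicative if $\|xy\|\le\|x\|\,\|y\|$. *)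

theory Defs
  imports "HOL-Analysis.Analysis"
begin

definition submult_matrix_norm :: "(complex^'n^'n \<Rightarrow> real) \<Rightarrow> bool" where
  "submult_matrix_norm nrm \<longleftrightarrow>
     (\<forall>x. 0 \<le> nrm x) \<and>
     (\<forall>x. nrm x = 0 \<longleftrightarrow> x = 0) \<and>
     (\<forall>x y. nrm (x + y) \<le> nrm x + nrm y) \<and>
     (\<forall>c x. nrm (\<chi> i j. c * x $ i $ j) = cmod c * nrm x) \<and>
     (\<forall>x y. nrm (x ** y) \<le> nrm x * nrm y)"

definition GL :: "(complex^'n^'n) set" where
  "GL = {x. invertible x}"

text \<open>A semicharacter on GL_n(C): locally bounded (w.r.t. the subspace topology of GL_n(C)
  in the matrix space), values in [1,+oo), and submultiplicative. Only values on GL_n(C) matter.\<close>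
definition semicharacter_GL :: "(complex^'n^'n \<Rightarrow> real) \<Rightarrow> bool" where
  "semicharacter_GL f \<longleftrightarrow>
     (\<forall>x\<in>GL. 1 \<le> f x) \<and>
     (\<forall>x\<in>GL. \<forall>y\<in>GL. f (x ** y) \<le> f x * f y) \<and>
     (\<forall>x\<in>GL. \<exists>U. open U \<and> x \<in> U \<and> (\<exists>B. \<forall>y\<in>U \<inter> GL. f y \<le> B))"

definition r_fun :: "(complex^'n^'n \<Rightarrow> real) \<Rightarrow> real \<Rightarrow> nat \<Rightarrow> complex^'n^'n \<Rightarrow> real" where
  "r_fun nrm C N x = C * (max (nrm x) (nrm (matrix_inv x))) ^ N"

end

theory Submission
  imports Defs
begin


definition l1 :: "complex^'n^'n \<Rightarrow> real" where
  "l1 A = (\<Sum>i\<in>UNIV. \<Sum>j\<in>UNIV. cmod (A$i$j))"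

lemma norm_le_l1: "norm A \<le> l1 A"
proof -
  have "norm A = L2_set (\<lambda>i. norm (A$i)) UNIV" by (simp add: norm_vec_def)
  also have "\<dots> \<le> (\<Sum>i\<in>UNIV. norm (A$i))" by (rule L2_set_le_sum) auto
  also have "\<dots> \<le> (\<Sum>i\<in>UNIV. \<Sum>j\<in>UNIV. cmod (A$i$j))"
  proof (rule sum_mono)
    fix i
    have "norm (A$i) = L2_set (\<lambda>j. norm (A$i$j)) UNIV" by (simp add: norm_vec_def)
    also have "\<dots> \<le> (\<Sum>j\<in>UNIV. norm (A$i$j))" by (rule L2_set_le_sum) auto
    finally show "norm (A$i) \<le> (\<Sum>j\<in>UNIV. cmod (A$i$j))" by simp
  qed
  finally show ?thesis unfolding l1_def .
qed

lemma entry_le_norm: fixes A :: "complex^'n^'m" shows "cmod (A$i$j) \<le> norm A"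
proof -
  have "norm (A$i$j) \<le> norm (A$i)" by (simp add: Finite_Cartesian_Product.norm_nth_le)
  also have "\<dots> \<le> norm A" by (simp add: Finite_Cartesian_Product.norm_nth_le)
  finally show ?thesis by simp
qed

lemma mat1_GL: "mat 1 \<in> GL"
  unfolding GL_def invertible_def by (auto intro: exI[of _ "mat 1"])

lemma GL_mult: "x \<in> GL \<Longrightarrow> y \<in> GL \<Longrightarrow> x ** y \<in> GL"
  unfolding GL_def by (auto intro: invertible_mult)

primrec mpow :: "complex^'n^'n \<Rightarrow> nat \<Rightarrow> complex^'n^'n" where
  "mpow y 0 = mat 1"
| "mpow y (Suc m) = y ** mpow y m"

lemma mpow_GL: "y \<in> GL \<Longrightarrow> mpow y m \<in> GL"
  by (induct m) (auto simp: mat1_GL GL_mult)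

definition dg :: "('n \<Rightarrow> complex) \<Rightarrow> complex^'n^'n" where
  "dg d = (\<chi> i j. if i = j then d i else 0)"

lemma dg_mult: fixes d e :: "'n::finite \<Rightarrow> complex" shows "dg d ** dg e = dg (\<lambda>i. d i * e i)"
proof -
  have "(\<Sum>k\<in>UNIV. (if i = k then d i else 0) * (if k = j then e k else 0))
        = (if i = j then d i * e i else 0)" for i j :: 'n
  proof -
    have "\<And>k. (if i = k then d i else 0) * (if k = j then e k else 0)
            = (if k = i then (if i = j then d i * e i else 0) else 0)" by auto
    then have "(\<Sum>k\<in>UNIV. (if i = k then d i else 0) * (if k = j then e k else 0))
        = (\<Sum>k\<in>UNIV. (if k = i then (if i = j then d i * e i else 0) else 0))"
      by (intro sum.cong) auto
    also have "\<dots> = (if i = j then d i * e i else 0)" by simp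
    finally show ?thesis .
  qed
  then show ?thesis unfolding dg_def matrix_matrix_mult_def by (simp add: vec_eq_iff)
qed

lemma dg_one: "dg (\<lambda>_. 1) = mat 1"
  unfolding dg_def mat_def by (simp add: vec_eq_iff)

lemma mpow_dg: "mpow (dg d) m = dg (\<lambda>i. d i ^ m)"
  by (induct m) (simp_all add: dg_one dg_mult)

lemma dg_GL: "(\<And>i. d i \<noteq> 0) \<Longrightarrow> dg d \<in> GL"
  unfolding GL_def invertible_def mem_Collect_eq
  by (rule exI[of _ "dg (\<lambda>i. inverse (d i))"]) (simp add: dg_mult dg_one)

context
  fixes f :: "complex^'n^'n \<Rightarrow> real"
  assumes sc: "semicharacter_GL f"
begin

lemma f_loc: "x \<in> GL \<Longrightarrow> \<exists>U. open U \<and> x \<in> U \<and> (\<exists>B. \<forall>y\<in>U \<inter> GL. f y \<le> B)"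
  using sc unfolding semicharacter_GL_def by (elim conjE) (rule bspec)

lemma f_ge1: "x \<in> GL \<Longrightarrow> 1 \<le> f x"
  using sc unfolding semicharacter_GL_def by (elim conjE) (rule bspec)

lemma f_mult: "x \<in> GL \<Longrightarrow> y \<in> GL \<Longrightarrow> f (x ** y) \<le> f x * f y"
proof -
  assume a: "x \<in> GL" "y \<in> GL"
  have "\<forall>x\<in>GL. \<forall>y\<in>GL. f (x ** y) \<le> f x * f y"
    using sc unfolding semicharacter_GL_def by (elim conjE)
  then show ?thesis using a by blast
qed

lemma f_mult3: "x \<in> GL \<Longrightarrow> y \<in> GL \<Longrightarrow> z \<in> GL \<Longrightarrow> f (x ** y ** z) \<le> f x * f y * f z"
proof -
  assume a: "x \<in> GL" "y \<in> GL" "z \<in> GL"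
  have "f (x ** y ** z) \<le> f (x ** y) * f z" using a by (intro f_mult GL_mult)
  also have "\<dots> \<le> f x * f y * f z"
    using a f_mult[of x y] f_ge1[of z] by (intro mult_right_mono) auto
  finally show ?thesis .
qed

lemma f_mpow: "y \<in> GL \<Longrightarrow> f (mpow y (Suc m)) \<le> f y ^ Suc m"
proof (induct m)
  case 0 then show ?case by simp
next
  case (Suc m)
  have y: "y \<in> GL" by (rule Suc.prems)
  have IH: "f (mpow y (Suc m)) \<le> f y ^ Suc m" using Suc.hyps y by blast
  have "f (mpow y (Suc (Suc m))) = f (y ** mpow y (Suc m))" by (simp only: mpow.simps)
  also have "\<dots> \<le> f y * f (mpow y (Suc m))"
    by (rule f_mult[OF y mpow_GL[OF y]])
  also have "\<dots> \<le> f y * f y ^ Suc m"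
    using f_ge1[OF y] IH by (simp add: mult_left_mono)
  finally show ?case by (simp only: power_Suc)
qed

lemma near_id:
  obtains e B where "e > 0" "B \<ge> 1" "\<And>y. y \<in> GL \<Longrightarrow> l1 (y - mat 1) < e \<Longrightarrow> f y \<le> B"
proof -
  obtain U B0 where U: "open U" "mat 1 \<in> U" "\<And>y. y \<in> U \<inter> GL \<Longrightarrow> f y \<le> B0"
    using f_loc[OF mat1_GL] by blast
  obtain e where e: "e > 0" "ball (mat 1) e \<subseteq> U"
    using U(1,2) open_contains_ball by blast
  show ?thesis
  proof (rule that[of e "max B0 1"])
    fix y :: "complex^'n^'n" assume y: "y \<in> GL" "l1 (y - mat 1) < e"
    have "dist (mat 1) y < e" using norm_le_l1[of "y - mat 1"] y(2)
      by (simp add: dist_norm norm_minus_commute)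
    then have "y \<in> U" using e(2) by (simp add: subset_iff)
    then have "f y \<le> B0" using U(3)[of y] y(1) by simp
    then show "f y \<le> max B0 1" by simp
  next
    show "0 < e" by (rule e(1))
  next
    show "1 \<le> max B0 1" by simp
  qed
qed

lemma compact_bound:
  assumes K: "compact K" "K \<subseteq> GL"
  shows "\<exists>B. \<forall>x\<in>K. f x \<le> B"
proof -
  have "\<forall>x\<in>GL. \<exists>U. open U \<and> x \<in> U \<and> (\<exists>B. \<forall>y\<in>U \<inter> GL. f y \<le> B)"
    using f_loc by blast
  then have "\<forall>x\<in>GL. \<exists>p. open (fst p) \<and> x \<in> fst p \<and> (\<forall>y\<in>fst p \<inter> GL. f y \<le> snd p)"
    by simp
  then obtain g where g: "\<forall>x\<in>GL. open (fst (g x)) \<and> x \<in> fst (g x) \<and> (\<forall>y\<in>fst (g x) \<inter> GL. f y \<le> snd (g x))"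
    by (rule bchoice[elim_format]) blast
  define U where "U x = fst (g x)" for x
  define Bf where "Bf x = snd (g x)" for x
  have UB: "\<And>x. x \<in> GL \<Longrightarrow> open (U x) \<and> x \<in> U x \<and> (\<forall>y\<in>U x \<inter> GL. f y \<le> Bf x)"
    using g unfolding U_def Bf_def by blast
  have "K \<subseteq> \<Union> (U ` K)" using UB K(2) by blast
  then obtain D where D: "D \<subseteq> K" "finite D" "K \<subseteq> \<Union> (U ` D)"
    using compactE_image[OF K(1), of K U] UB K(2) by blast
  show ?thesis
  proof (rule exI[of _ "\<Sum>d\<in>D. \<bar>Bf d\<bar>"], intro ballI)
    fix x assume x: "x \<in> K"
    then obtain d where d: "d \<in> D" "x \<in> U d" using D by blast
    have "f x \<le> Bf d" using UB[of d] d D K x by auto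
    also have "\<dots> \<le> \<bar>Bf d\<bar>" by simp
    also have "\<dots> \<le> (\<Sum>d\<in>D. \<bar>Bf d\<bar>)" using d D by (intro member_le_sum) auto
    finally show "f x \<le> (\<Sum>d\<in>D. \<bar>Bf d\<bar>)" .
  qed
qed

end


definition Emat :: "'n \<Rightarrow> 'n \<Rightarrow> complex \<Rightarrow> complex^'n^'n" where
  "Emat i j c = (\<chi> a b. if a = i \<and> b = j then c else 0)"

lemma mat_decomp: fixes x :: "complex^'n^'n"
  shows "x = (\<Sum>i\<in>UNIV. \<Sum>j\<in>UNIV. Emat i j (x$i$j))"
proof -
  have "(\<Sum>i\<in>UNIV. \<Sum>j\<in>UNIV. Emat i j (x$i$j)) $ a $ b = x $ a $ b" for a b
  proof -
    have "(\<Sum>i\<in>UNIV. \<Sum>j\<in>UNIV. Emat i j (x$i$j)) $ a $ b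
        = (\<Sum>i\<in>UNIV. \<Sum>j\<in>UNIV. Emat i j (x$i$j) $ a $ b)"
      by (simp add: sum_component)
    also have "\<dots> = (\<Sum>i\<in>UNIV. \<Sum>j\<in>UNIV. if i = a then (if j = b then x$a$b else 0) else 0)"
      unfolding Emat_def by (intro sum.cong refl) auto
    also have "\<dots> = (\<Sum>i\<in>UNIV. if i = a then (\<Sum>j\<in>UNIV. if j = b then x$a$b else 0) else 0)"
      by (intro sum.cong refl) (simp split: if_split)
    also have "\<dots> = x$a$b" by simp
    finally show ?thesis .
  qed
  then show ?thesis by (simp add: vec_eq_iff)
qed

lemma l1_le_norm: "l1 (x::complex^'n^'n) \<le> real (CARD('n))^2 * norm x"
proof -
  have "l1 x \<le> (\<Sum>i\<in>(UNIV::'n set). \<Sum>j\<in>(UNIV::'n set). norm x)"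
    unfolding l1_def by (intro sum_mono entry_le_norm)
  also have "\<dots> = real (CARD('n))^2 * norm x" by (simp add: power2_eq_square)
  finally show ?thesis .
qed

lemma l1_nonneg: "0 \<le> l1 x" unfolding l1_def by (intro sum_nonneg) auto

context
  fixes nrm :: "complex^'n^'n \<Rightarrow> real"
  assumes sm: "submult_matrix_norm nrm"
begin

lemma nrm_nonneg: "0 \<le> nrm x" using sm unfolding submult_matrix_norm_def by blast
lemma nrm_eq0: "nrm x = 0 \<longleftrightarrow> x = 0" using sm unfolding submult_matrix_norm_def by blast
lemma nrm_tri: "nrm (x + y) \<le> nrm x + nrm y" using sm unfolding submult_matrix_norm_def by blast
lemma nrm_scale: "nrm (\<chi> i j. c * x $ i $ j) = cmod c * nrm x"
  using sm unfolding submult_matrix_norm_def by blast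
lemma nrm_mult: "nrm (x ** y) \<le> nrm x * nrm y" using sm unfolding submult_matrix_norm_def by blast

lemma nrm_0: "nrm 0 = 0" using nrm_eq0 by simp

lemma nrm_sum: "finite S \<Longrightarrow> nrm (sum g S) \<le> (\<Sum>s\<in>S. nrm (g s))"
proof (induct S rule: finite_induct)
  case empty then show ?case by (simp add: nrm_0)
next
  case (insert a S)
  have "nrm (sum g (insert a S)) = nrm (g a + sum g S)" using insert by simp
  also have "\<dots> \<le> nrm (g a) + nrm (sum g S)" by (rule nrm_tri)
  also have "\<dots> \<le> nrm (g a) + (\<Sum>s\<in>S. nrm (g s))" using insert by simp
  finally show ?case using insert by simp
qed

lemma nrm_Emat: "nrm (Emat i j c) = cmod c * nrm (Emat i j 1)"
proof -
  have "Emat i j c = (\<chi> a b. c * Emat i j 1 $ a $ b)" unfolding Emat_def by (simp add: vec_eq_iff)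
  then show ?thesis using nrm_scale by simp
qed

definition c2 :: real where "c2 = (\<Sum>i\<in>UNIV. \<Sum>j\<in>UNIV. nrm (Emat i j 1))"

lemma Emat_le_c2: "nrm (Emat i j 1) \<le> c2"
proof -
  have "nrm (Emat i j 1) \<le> (\<Sum>j'\<in>UNIV. nrm (Emat i j' 1))"
    by (rule member_le_sum) (auto simp: nrm_nonneg)
  also have "\<dots> \<le> c2" unfolding c2_def
    by (rule member_le_sum[of i UNIV "\<lambda>i. \<Sum>j'\<in>UNIV. nrm (Emat i j' 1)"]) (auto intro: sum_nonneg nrm_nonneg)
  finally show ?thesis .
qed

lemma c2_nonneg: "0 \<le> c2" using Emat_le_c2 nrm_nonneg order_trans by blast

lemma nrm_le_l1: "nrm x \<le> c2 * l1 x"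
proof -
  have "nrm x = nrm (\<Sum>i\<in>UNIV. \<Sum>j\<in>UNIV. Emat i j (x$i$j))" using mat_decomp[of x] by simp
  also have "\<dots> \<le> (\<Sum>i\<in>UNIV. nrm (\<Sum>j\<in>UNIV. Emat i j (x$i$j)))" by (rule nrm_sum) simp
  also have "\<dots> \<le> (\<Sum>i\<in>UNIV. \<Sum>j\<in>UNIV. nrm (Emat i j (x$i$j)))"
    by (intro sum_mono nrm_sum) simp
  also have "\<dots> \<le> (\<Sum>i\<in>UNIV. \<Sum>j\<in>UNIV. c2 * cmod (x$i$j))"
  proof (intro sum_mono)
    fix i j
    have "nrm (Emat i j (x$i$j)) = cmod (x$i$j) * nrm (Emat i j 1)" by (rule nrm_Emat)
    also have "\<dots> \<le> cmod (x$i$j) * c2" by (intro mult_left_mono Emat_le_c2) simp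
    finally show "nrm (Emat i j (x$i$j)) \<le> c2 * cmod (x$i$j)" by (simp add: mult.commute)
  qed
  also have "\<dots> = c2 * l1 x" unfolding l1_def by (simp add: sum_distrib_left)
  finally show ?thesis .
qed

lemma nrm_minus_commute: "nrm (x - y) = nrm (y - x)"
proof -
  have "y - x = (\<chi> i j. (-1) * (x - y) $ i $ j)" by (simp add: vec_eq_iff)
  then show ?thesis using nrm_scale[of "-1" "x - y"] by simp
qed

lemma nrm_lip: "\<bar>nrm x - nrm y\<bar> \<le> nrm (x - y)"
proof -
  have "nrm x \<le> nrm (x - y) + nrm y" using nrm_tri[of "x - y" y] by simp
  moreover have "nrm y \<le> nrm (y - x) + nrm x" using nrm_tri[of "y - x" x] by simp
  ultimately show ?thesis using nrm_minus_commute[of x y] by linarith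
qed

lemma nrm_lip2: "\<bar>nrm x - nrm y\<bar> \<le> (c2 * real (CARD('n))^2 + 1) * norm (x - y)"
proof -
  have "\<bar>nrm x - nrm y\<bar> \<le> c2 * l1 (x - y)" using nrm_lip nrm_le_l1 order_trans by blast
  also have "\<dots> \<le> c2 * (real (CARD('n))^2 * norm (x - y))"
    by (intro mult_left_mono l1_le_norm c2_nonneg)
  also have "\<dots> \<le> (c2 * real (CARD('n))^2 + 1) * norm (x - y)"
    by (simp add: algebra_simps)
  finally show ?thesis .
qed

lemma nrm_cont: "continuous_on S nrm"
proof (rule continuous_on_iff[THEN iffD2], intro ballI allI impI)
  fix x e assume e: "(0::real) < e"
  define K where "K = c2 * real (CARD('n))^2 + 1"
  have K: "K > 0" unfolding K_def using c2_nonneg by (simp add: add_nonneg_pos)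
  show "\<exists>d>0. \<forall>x'\<in>S. dist x' x < d \<longrightarrow> dist (nrm x') (nrm x) < e"
  proof (intro exI[of _ "e / K"] conjI ballI impI)
    show "0 < e / K" using e K by simp
    fix x' assume "dist x' x < e / K"
    then have "K * norm (x' - x) < e" using K by (simp add: dist_norm field_simps)
    moreover have "\<bar>nrm x' - nrm x\<bar> \<le> K * norm (x' - x)" using nrm_lip2 unfolding K_def .
    ultimately show "dist (nrm x') (nrm x) < e" by (simp add: dist_real_def)
  qed
qed

lemma norm_le_nrm: "\<exists>c>0. \<forall>x. norm x \<le> c * nrm x"
proof -
  define S where "S = sphere (0::complex^'n^'n) 1"
  have mat1: "mat 1 \<noteq> (0::complex^'n^'n)"
  proof
    assume "mat 1 = (0::complex^'n^'n)"
    then have "(mat 1 :: complex^'n^'n) $ undefined $ undefined = 0" by simp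
    then show False by (simp add: mat_def)
  qed
  define x0 :: "complex^'n^'n" where "x0 = scaleR (1 / norm (mat 1 :: complex^'n^'n)) (mat 1)"
  have "x0 \<in> S" unfolding S_def x0_def using mat1 by simp
  then have Sne: "S \<noteq> {}" by blast
  obtain z where z: "z \<in> S" "\<And>y. y \<in> S \<Longrightarrow> nrm z \<le> nrm y"
    using continuous_attains_inf[OF _ Sne nrm_cont] unfolding S_def by (metis compact_sphere)
  have "z \<noteq> 0" using z(1) unfolding S_def by auto
  then have m: "nrm z > 0" using nrm_eq0[of z] nrm_nonneg[of z] by linarith
  show ?thesis
  proof (intro exI[of _ "1 / nrm z"] conjI allI)
    show "0 < 1 / nrm z" using m by simp
    fix x :: "complex^'n^'n"
    show "norm x \<le> 1 / nrm z * nrm x"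
    proof (cases "x = 0")
      case True then show ?thesis by (simp add: nrm_0)
    next
      case False
      then have nx: "norm x > 0" by simp
      define y where "y = scaleR (1 / norm x) x"
      have "y \<in> S" unfolding S_def y_def using nx by simp
      then have "nrm z \<le> nrm y" by (rule z(2))
      also have "y = (\<chi> i j. complex_of_real (1 / norm x) * x $ i $ j)"
      proof -
        have "\<And>i j. (1 / norm x) *\<^sub>R (x$i$j) = complex_of_real (1 / norm x) * x$i$j"
          by (simp only: scaleR_conv_of_real)
        then show ?thesis unfolding y_def by (simp add: vec_eq_iff del: of_real_divide)
      qed
      then have "nrm y = cmod (complex_of_real (1 / norm x)) * nrm x" by (simp only: nrm_scale)
      then have "nrm y = (1 / norm x) * nrm x" using nx by (simp only: norm_of_real) simp
      finally have "nrm z * norm x \<le> nrm x" using nx by (simp add: field_simps)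
      then show ?thesis using m by (simp add: field_simps)
    qed
  qed
qed

end


lemma exp_small: assumes "e > 0" shows "\<exists>\<eta>>0. \<forall>z::complex. cmod z < \<eta> \<longrightarrow> cmod (exp z - 1) < e"
proof -
  have "exp \<midarrow>0\<rightarrow> exp (0::complex)" using isCont_exp[of 0] unfolding isCont_def .
  then have "exp \<midarrow>0\<rightarrow> (1::complex)" by simp
  then obtain s where s: "s > 0" "\<And>x::complex. x \<noteq> 0 \<and> norm (x - 0) < s \<Longrightarrow> norm (exp x - 1) < e"
    using assms unfolding LIM_eq by blast
  show ?thesis
  proof (intro exI[of _ s] conjI allI impI)
    fix z :: complex assume "cmod z < s"
    then show "cmod (exp z - 1) < e" using s(2)[of z] assms by (cases "z = 0") auto
  qed (rule s(1))
qed

lemma Ln_bound: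
  assumes z: "z \<noteq> 0" "cmod z \<le> L" "1 \<le> L * cmod z"
  shows "cmod (Ln z) \<le> ln L + pi"
proof -
  have cz: "cmod z > 0" using z by simp
  have L: "L > 0" using z(2) cz by linarith
  have "ln (cmod z) \<le> ln L" using z(2) cz L by simp
  moreover have "0 \<le> ln (L * cmod z)" using z(3) by simp
  then have "- ln L \<le> ln (cmod z)" using L cz by (simp add: ln_mult)
  ultimately have r: "\<bar>Re (Ln z)\<bar> \<le> ln L" using z(1) by simp
  have i: "\<bar>Im (Ln z)\<bar> \<le> pi" using Im_Ln_le_pi[OF z(1)] mpi_less_Im_Ln[OF z(1)] by linarith
  show ?thesis using cmod_le[of "Ln z"] r i by linarith
qed

lemma l1_dg: "l1 (dg g - mat 1) = (\<Sum>i\<in>UNIV. cmod (g i - 1))"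
proof -
  have "\<And>i j. (dg g - mat 1) $ i $ j = (if j = i then g i - 1 else 0)"
    unfolding dg_def mat_def by simp
  then have "l1 (dg g - mat 1) = (\<Sum>i\<in>UNIV. \<Sum>j\<in>UNIV. if j = i then cmod (g i - 1) else 0)"
    unfolding l1_def by (intro sum.cong refl) (simp add: if_distrib)
  also have "\<dots> = (\<Sum>i\<in>UNIV. cmod (g i - 1))" by simp
  finally show ?thesis .
qed

context
  fixes f :: "complex^'n^'n \<Rightarrow> real"
  assumes sc: "semicharacter_GL f"
begin

lemma diag_bound:
  "\<exists>C N. C \<ge> 1 \<and> (\<forall>d L. L \<ge> 1 \<longrightarrow> (\<forall>i. d i \<noteq> 0 \<and> cmod (d i) \<le> L \<and> 1 \<le> L * cmod (d i))
        \<longrightarrow> f (dg d) \<le> C * L ^ N)"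
proof -
  obtain e B where eB: "e > 0" "B \<ge> 1" "\<And>y. y \<in> GL \<Longrightarrow> l1 (y - mat 1) < e \<Longrightarrow> f y \<le> B"
    using near_id[OF sc] by blast
  define e' where "e' = e / real CARD('n)"
  have e': "e' > 0" unfolding e'_def using eB(1) by simp
  obtain \<eta> where \<eta>: "\<eta> > 0" "\<And>z::complex. cmod z < \<eta> \<Longrightarrow> cmod (exp z - 1) < e'"
    using exp_small[OF e'] by blast
  define C where "C = B powr (pi / \<eta> + 2)"
  define N where "N = nat \<lceil>ln B / \<eta>\<rceil>"
  show ?thesis
  proof (intro exI[of _ C] exI[of _ N] conjI allI impI)
    show "1 \<le> C" unfolding C_def using eB(2) \<eta>(1) by (simp add: ge_one_powr_ge_zero)
    fix d :: "'n \<Rightarrow> complex" and L :: real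
    assume L: "1 \<le> L" and d: "\<forall>i. d i \<noteq> 0 \<and> cmod (d i) \<le> L \<and> 1 \<le> L * cmod (d i)"
    define m where "m = nat \<lceil>(ln L + pi) / \<eta>\<rceil> + 1"
    have lnL: "ln L \<ge> 0" using L by simp
    have m_gt: "(ln L + pi) / \<eta> < real m" unfolding m_def by linarith
    have m_le: "real m \<le> (ln L + pi) / \<eta> + 2" unfolding m_def
      using lnL \<eta>(1) pi_gt_zero by (simp add: of_nat_nat) linarith
    have m_pos: "m > 0" unfolding m_def by simp
    define g where "g i = exp (Ln (d i) / of_nat m)" for i
    have small: "cmod (g i - 1) < e'" for i
    proof -
      have "cmod (Ln (d i)) \<le> ln L + pi" using d Ln_bound by blast
      then have "cmod (Ln (d i) / of_nat m) \<le> (ln L + pi) / real m"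
        using m_pos by (simp add: norm_divide divide_right_mono)
      also have "\<dots> < \<eta>" using m_gt m_pos \<eta>(1) by (simp add: field_simps)
      finally show ?thesis unfolding g_def using \<eta>(2) by blast
    qed
    have "l1 (dg g - mat 1) = (\<Sum>i\<in>UNIV. cmod (g i - 1))" by (rule l1_dg)
    also have "\<dots> < (\<Sum>i\<in>(UNIV::'n set). e')" by (rule sum_strict_mono) (auto simp: small)
    also have "\<dots> = e" unfolding e'_def by simp
    finally have "l1 (dg g - mat 1) < e" .
    moreover have gGL: "dg g \<in> GL" by (rule dg_GL) (simp add: g_def)
    ultimately have fg: "f (dg g) \<le> B" using eB(3) by blast
    have "dg d = mpow (dg g) m"
    proof -
      have "\<And>i. g i ^ m = d i" unfolding g_def using m_pos d
        by (simp add: exp_divide_power_eq exp_Ln)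
      then show ?thesis by (simp add: mpow_dg)
    qed
    then have "f (dg d) = f (mpow (dg g) (Suc (m - 1)))" using m_pos by simp
    also have "\<dots> \<le> f (dg g) ^ Suc (m - 1)" by (rule f_mpow[OF sc gGL])
    also have "\<dots> = f (dg g) ^ m" using m_pos by simp
    also have "\<dots> \<le> B ^ m" using fg f_ge1[OF sc gGL] by (intro power_mono) auto
    also have "\<dots> = B powr real m" using eB(2) by (simp add: powr_realpow)
    also have "\<dots> \<le> B powr ((ln L + pi) / \<eta> + 2)" using eB(2) m_le by (intro powr_mono) auto
    also have "\<dots> = C * B powr (ln L / \<eta>)" unfolding C_def
      by (simp add: powr_add[symmetric] add_divide_distrib algebra_simps)
    also have "B powr (ln L / \<eta>) = L powr (ln B / \<eta>)"
      using eB(2) L by (simp add: powr_def)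
    also have "L powr (ln B / \<eta>) \<le> L powr real N"
      unfolding N_def using L by (intro powr_mono) (auto intro: real_nat_ceiling_ge)
    also have "\<dots> = L ^ N" using L by (simp add: powr_realpow)
    finally show "f (dg d) \<le> C * L ^ N" using C_def eB(2) by (simp add: mult_left_mono)
  qed
qed

end


definition hp :: "complex^'n \<Rightarrow> complex^'n \<Rightarrow> complex" where
  "hp u v = (\<Sum>i\<in>UNIV. u$i * cnj (v$i))"

definition bp :: "complex^'n \<Rightarrow> complex^'n \<Rightarrow> complex" where
  "bp w u = (\<Sum>i\<in>UNIV. w$i * u$i)"

lemma hp_diff_left: "hp (u - v) w = hp u w - hp v w"
  unfolding hp_def by (simp add: sum_subtractf algebra_simps)

lemma hp_add_left: "hp (u + v) w = hp u w + hp v w"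
  unfolding hp_def by (simp add: sum.distrib algebra_simps)

lemma hp_scale_left: "hp (c *s u) w = c * hp u w"
  unfolding hp_def by (simp add: sum_distrib_left algebra_simps)

lemma hp_scale_right: "hp u (c *s w) = cnj c * hp u w"
  unfolding hp_def by (simp add: sum_distrib_left algebra_simps)

lemma hp_sum_left: "hp (\<Sum>i\<in>S. g i) w = (\<Sum>i\<in>S. hp (g i) w)"
  unfolding hp_def by (simp add: sum_distrib_right sum.swap[of _ S])

lemma hp_cnj: "hp v u = cnj (hp u v)"
  unfolding hp_def by (simp add: mult.commute)

lemma norm_sq_vec: "norm (u::complex^'n) ^ 2 = (\<Sum>i\<in>UNIV. cmod (u$i) ^ 2)"
  unfolding norm_vec_def L2_set_def by (simp add: sum_nonneg)

lemma hp_self: "hp u u = complex_of_real (norm u ^ 2)"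
proof -
  have "hp u u = (\<Sum>i\<in>UNIV. complex_of_real (cmod (u$i) ^ 2))"
    unfolding hp_def by (intro sum.cong refl) (simp add: complex_norm_square del: of_real_power)
  also have "\<dots> = complex_of_real (norm u ^ 2)" by (simp add: norm_sq_vec)
  finally show ?thesis .
qed

lemma bp_diff: "bp w (u - v) = bp w u - bp w v"
  unfolding bp_def by (simp add: sum_subtractf algebra_simps)

lemma bp_scale: "bp w (c *s u) = c * bp w u"
  unfolding bp_def by (simp add: sum_distrib_left algebra_simps)

lemma bp_sum: "bp w (\<Sum>i\<in>S. g i) = (\<Sum>i\<in>S. bp w (g i))"
  unfolding bp_def by (simp add: sum_distrib_left sum.swap[of _ S])

lemma bp_zero: "bp w 0 = 0" unfolding bp_def by simp

lemma bp_bound: "cmod (bp w u) \<le> real CARD('n) * (norm w * norm (u::complex^'n))"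
proof -
  have "cmod (bp w u) \<le> (\<Sum>i\<in>UNIV. cmod (w$i * u$i))" unfolding bp_def by (rule norm_sum)
  also have "\<dots> \<le> (\<Sum>i\<in>(UNIV::'n set). norm w * norm u)"
  proof (intro sum_mono)
    fix i
    have "cmod (w$i * u$i) = cmod (w$i) * cmod (u$i)" by (simp add: norm_mult)
    also have "\<dots> \<le> norm w * norm u"
      by (intro mult_mono Finite_Cartesian_Product.norm_nth_le) auto
    finally show "cmod (w$i * u$i) \<le> norm w * norm u" .
  qed
  also have "\<dots> = real CARD('n) * (norm w * norm u)" by simp
  finally show ?thesis .
qed

definition gv :: "(nat \<Rightarrow> complex^'n) \<Rightarrow> (nat \<Rightarrow> complex^'n) \<Rightarrow> nat \<Rightarrow> complex^'n" where
  "gv c q l = c l - (\<Sum>i<l. hp (c l) (q i) *s q i)"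

fun gsl :: "(nat \<Rightarrow> complex^'n) \<Rightarrow> nat \<Rightarrow> (complex^'n) list" where
  "gsl c 0 = []"
| "gsl c (Suc l) = (let qs = gsl c l; v = gv c (\<lambda>i. qs ! i) l in qs @ [complex_of_real (1 / norm v) *s v])"

definition gq :: "(nat \<Rightarrow> complex^'n) \<Rightarrow> nat \<Rightarrow> complex^'n" where
  "gq c l = gsl c (Suc l) ! l"

lemma length_gsl: "length (gsl c l) = l"
  by (induct l) (simp_all add: Let_def)

lemma gsl_nth: "i < l \<Longrightarrow> gsl c l ! i = gq c i"
proof (induct l)
  case 0 then show ?case by simp
next
  case (Suc l)
  show ?case
  proof (cases "i < l")
    case True
    then have "gsl c (Suc l) ! i = gsl c l ! i" by (simp add: Let_def nth_append length_gsl)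
    then show ?thesis using Suc True by simp
  next
    case False
    then have "i = l" using Suc by simp
    then show ?thesis unfolding gq_def by simp
  qed
qed

lemma gv_cong: "(\<And>i. i < l \<Longrightarrow> q i = q' i) \<Longrightarrow> gv c q l = gv c q' l"
  unfolding gv_def by (intro arg_cong2[where f="(-)"] refl sum.cong) auto

lemma gq_eq: "gq c l = complex_of_real (1 / norm (gv c (gq c) l)) *s gv c (gq c) l"
proof -
  have "gv c (\<lambda>i. gsl c l ! i) l = gv c (gq c) l" by (rule gv_cong) (simp add: gsl_nth)
  then show ?thesis unfolding gq_def by (simp add: Let_def nth_append length_gsl)
qed


lemma sum_delta_mult: "j \<in> S \<Longrightarrow> finite S \<Longrightarrow> (\<Sum>i\<in>S. (a i::complex) * (if i = j then 1 else 0)) = a j"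
proof -
  assume j: "j \<in> S" and S: "finite S"
  have "(\<Sum>i\<in>S. a i * (if i = j then 1 else 0)) = (\<Sum>i\<in>S. if i = j then a i else 0)"
    by (intro sum.cong) auto
  also have "\<dots> = a j" using j S by simp
  finally show ?thesis .
qed

context
  fixes x xi :: "complex^'n^'n" and e :: "nat \<Rightarrow> 'n"
  assumes xi: "xi ** x = mat 1"
  and e: "bij_betw e {..<CARD('n)} UNIV"
begin

definition cc :: "nat \<Rightarrow> complex^'n" where "cc l = (\<chi> i. x$i$(e l))"

abbreviation "qq \<equiv> gq cc"
abbreviation "vv \<equiv> gv cc qq"

lemma e_inj: "i < CARD('n) \<Longrightarrow> j < CARD('n) \<Longrightarrow> e i = e j \<longleftrightarrow> i = j"
  using e unfolding bij_betw_def inj_on_def by auto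

lemma bp_row: "j < CARD('n) \<Longrightarrow> l < CARD('n) \<Longrightarrow> bp (xi $ (e l)) (cc j) = (if l = j then 1 else 0)"
proof -
  assume j: "j < CARD('n)" and l: "l < CARD('n)"
  have "bp (xi $ (e l)) (cc j) = (xi ** x) $ (e l) $ (e j)"
    unfolding bp_def cc_def matrix_matrix_mult_def by simp
  also have "\<dots> = (if e l = e j then 1 else 0)" unfolding xi mat_def by simp
  also have "\<dots> = (if l = j then 1 else 0)" using e_inj[OF l j] by simp
  finally show ?thesis .
qed

lemma bp_v: "bp w (vv l) = bp w (cc l) - (\<Sum>i<l. hp (cc l) (qq i) * bp w (qq i))"
  unfolding gv_def by (simp add: bp_diff bp_sum bp_scale)

lemma bp_q: "bp w (qq l) = complex_of_real (1 / norm (vv l)) * bp w (vv l)"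
  by (subst gq_eq) (simp add: bp_scale)

lemma hp_v: "hp (vv l) u = hp (cc l) u - (\<Sum>i<l. hp (cc l) (qq i) * hp (qq i) u)"
  unfolding gv_def by (simp add: hp_diff_left hp_sum_left hp_scale_left)

lemma hp_q: "hp (qq l) u = complex_of_real (1 / norm (vv l)) * hp (vv l) u"
  by (subst gq_eq) (simp add: hp_scale_left)

lemma inv_main: "l \<le> CARD('n) \<Longrightarrow>
   (\<forall>i<l. \<forall>j<l. hp (qq i) (qq j) = (if i = j then 1 else 0)) \<and>
   (\<forall>i<l. \<forall>w. (\<forall>j\<le>i. bp w (cc j) = 0) \<longrightarrow> bp w (qq i) = 0) \<and>
   (\<forall>i<l. vv i \<noteq> 0)"
proof (induct l)
  case 0 then show ?case by simp
next
  case (Suc l)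
  then have l: "l < CARD('n)" by simp
  from Suc have IH1: "\<And>i j. i < l \<Longrightarrow> j < l \<Longrightarrow> hp (qq i) (qq j) = (if i = j then 1 else 0)"
    and IH2: "\<And>i w. i < l \<Longrightarrow> (\<forall>j\<le>i. bp w (cc j) = 0) \<Longrightarrow> bp w (qq i) = 0"
    and IH3: "\<And>i. i < l \<Longrightarrow> vv i \<noteq> 0" by auto
  have A2: "bp w (qq l) = 0" if w: "\<forall>j\<le>l. bp w (cc j) = 0" for w
  proof -
    have "\<And>i. i < l \<Longrightarrow> bp w (qq i) = 0" using IH2 w by auto
    then have "bp w (vv l) = 0" using w by (simp add: bp_v)
    then show ?thesis by (simp add: bp_q)
  qed
  have A3: "vv l \<noteq> 0"
  proof
    assume v0: "vv l = 0"
    define w where "w = xi $ (e l)"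
    have "\<And>i. i < l \<Longrightarrow> bp w (qq i) = 0"
    proof -
      fix i assume i: "i < l"
      have "\<forall>j\<le>i. bp w (cc j) = 0" using i l unfolding w_def by (auto simp: bp_row)
      then show "bp w (qq i) = 0" using IH2 i by blast
    qed
    then have "bp w (vv l) = bp w (cc l)" by (simp add: bp_v)
    also have "\<dots> = 1" unfolding w_def using l by (simp add: bp_row)
    finally show False using v0 by (simp add: bp_zero)
  qed
  have nv: "norm (vv l) > 0" using A3 by simp
  have hpvq: "hp (vv l) (qq j) = 0" if j: "j < l" for j
  proof -
    have "(\<Sum>i<l. hp (cc l) (qq i) * hp (qq i) (qq j)) = (\<Sum>i<l. hp (cc l) (qq i) * (if i = j then 1 else 0))"
      using IH1 j by (intro sum.cong) auto
    also have "\<dots> = hp (cc l) (qq j)" using j by (intro sum_delta_mult) auto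
    finally show ?thesis by (simp add: hp_v)
  qed
  have A1a: "hp (qq l) (qq j) = 0" if "j < l" for j using hpvq[OF that] by (simp add: hp_q)
  have A1b: "hp (qq l) (qq l) = 1"
  proof -
    have "hp (qq l) (qq l) = complex_of_real (1 / norm (vv l)) * cnj (complex_of_real (1 / norm (vv l))) * hp (vv l) (vv l)"
      by (subst (1 2) gq_eq) (simp add: hp_scale_left hp_scale_right)
    also have "\<dots> = complex_of_real ((1 / norm (vv l)) * (1 / norm (vv l)) * norm (vv l) ^ 2)"
      by (simp add: hp_self)
    also have "\<dots> = 1" using nv by (simp add: power2_eq_square)
    finally show ?thesis .
  qed
  show ?case
  proof (intro conjI allI impI)
    fix i j assume i: "i < Suc l" and j: "j < Suc l"
    show "hp (qq i) (qq j) = (if i = j then 1 else 0)"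
    proof (cases "i = l")
      case True
      then show ?thesis using A1a A1b j by (cases "j = l") auto
    next
      case False
      then have i': "i < l" using i by simp
      show ?thesis
      proof (cases "j = l")
        case True
        then show ?thesis using A1a[OF i'] hp_cnj[of "qq l" "qq i"] i' by simp
      next
        case False then show ?thesis using IH1 i' j by simp
      qed
    qed
  next
    fix i w assume i: "i < Suc l" and w: "\<forall>j\<le>i. bp w (cc j) = 0"
    show "bp w (qq i) = 0"
    proof (cases "i = l")
      case True then show ?thesis using A2 w by simp
    next
      case False then show ?thesis using IH2 i w by simp
    qed
  next
    fix i assume "i < Suc l"
    then show "vv i \<noteq> 0" using IH3 A3 by (cases "i = l") auto
  qed
qed

end


definition adjm :: "complex^'n^'n \<Rightarrow> complex^'n^'n" where
  "adjm A = (\<chi> s r. cnj (A$r$s))"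

context
  fixes x xi :: "complex^'n^'n" and e :: "nat \<Rightarrow> 'n"
  assumes xi: "xi ** x = mat 1"
  and e: "bij_betw e {..<CARD('n)} UNIV"
begin

abbreviation "qq' \<equiv> gq (cc x e)"
abbreviation "vv' \<equiv> gv (cc x e) qq'"

lemma orth: "i < CARD('n) \<Longrightarrow> j < CARD('n) \<Longrightarrow> hp (qq' i) (qq' j) = (if i = j then 1 else 0)"
  using inv_main[OF xi e, of "CARD('n)"] by blast

lemma vnz: "l < CARD('n) \<Longrightarrow> vv' l \<noteq> 0"
  using inv_main[OF xi e, of "CARD('n)"] by blast

lemma vbound: "l < CARD('n) \<Longrightarrow> 1 \<le> norm (vv' l) * (real CARD('n) * norm (xi $ (e l)))"
proof -
  assume l: "l < CARD('n)"
  define w where "w = xi $ (e l)"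
  have IH2: "\<And>i w. i < l \<Longrightarrow> (\<forall>j\<le>i. bp w (cc x e j) = 0) \<Longrightarrow> bp w (qq' i) = 0"
    using inv_main[OF xi e, of l] l by auto
  have "\<And>i. i < l \<Longrightarrow> bp w (qq' i) = 0"
  proof -
    fix i assume i: "i < l"
    have "\<forall>j\<le>i. bp w (cc x e j) = 0" using i l unfolding w_def by (auto simp: bp_row[OF xi e])
    then show "bp w (qq' i) = 0" using IH2 i by blast
  qed
  then have "bp w (vv' l) = bp w (cc x e l)" by (simp add: bp_v[OF xi e])
  also have "\<dots> = 1" unfolding w_def using l by (simp add: bp_row[OF xi e])
  finally have "1 = cmod (bp w (vv' l))" by simp
  also have "\<dots> \<le> real CARD('n) * (norm w * norm (vv' l))" by (rule bp_bound)
  finally show ?thesis unfolding w_def by (simp add: algebra_simps)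
qed

lemma cc_decomp: "l < CARD('n) \<Longrightarrow>
   cc x e l = complex_of_real (norm (vv' l)) *s qq' l + (\<Sum>i<l. hp (cc x e l) (qq' i) *s qq' i)"
proof -
  assume l: "l < CARD('n)"
  have nv: "norm (vv' l) \<noteq> 0" using vnz[OF l] by simp
  have c1: "complex_of_real (norm (vv' l)) * complex_of_real (1 / norm (vv' l)) = 1"
  proof -
    have "norm (vv' l) * (1 / norm (vv' l)) = 1" using nv by simp
    then show ?thesis by (metis of_real_1 of_real_mult)
  qed
  have "complex_of_real (norm (vv' l)) *s qq' l = vv' l"
    by (subst gq_eq) (simp only: vector_smult_assoc c1 vector_smult_lid)
  then show ?thesis unfolding gv_def by simp
qed

lemma hp_cq_lt: "j < i \<Longrightarrow> i < CARD('n) \<Longrightarrow> hp (cc x e j) (qq' i) = 0"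
proof -
  assume ji: "j < i" and i: "i < CARD('n)"
  have j: "j < CARD('n)" using ji i by simp
  have "hp (cc x e j) (qq' i) = complex_of_real (norm (vv' j)) * hp (qq' j) (qq' i)
          + (\<Sum>m<j. hp (cc x e j) (qq' m) * hp (qq' m) (qq' i))"
    by (subst cc_decomp[OF j]) (simp add: hp_add_left hp_sum_left hp_scale_left)
  also have "\<dots> = 0" using ji i j by (simp add: orth)
  finally show ?thesis .
qed

lemma hp_cq_eq: "j < CARD('n) \<Longrightarrow> hp (cc x e j) (qq' j) = complex_of_real (norm (vv' j))"
proof -
  assume j: "j < CARD('n)"
  have "hp (cc x e j) (qq' j) = complex_of_real (norm (vv' j)) * hp (qq' j) (qq' j)
          + (\<Sum>m<j. hp (cc x e j) (qq' m) * hp (qq' m) (qq' j))"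
    by (subst cc_decomp[OF j]) (simp add: hp_add_left hp_sum_left hp_scale_left)
  also have "\<dots> = complex_of_real (norm (vv' j))" using j by (simp add: orth)
  finally show ?thesis .
qed

lemma norm_q: "i < CARD('n) \<Longrightarrow> norm (qq' i) = 1"
proof -
  assume i: "i < CARD('n)"
  have "complex_of_real (norm (qq' i) ^ 2) = 1" using orth[OF i i] by (simp add: hp_self)
  then have "norm (qq' i) ^ 2 = 1" by (metis of_real_eq_1_iff)
  then show ?thesis using norm_ge_zero[of "qq' i"] by (simp add: power2_eq_1_iff)
qed

definition kk :: "'n \<Rightarrow> nat" where "kk = the_inv_into {..<CARD('n)} e"

lemma kk_lt: "kk s < CARD('n)"
  unfolding kk_def using e the_inv_into_into[of e "{..<CARD('n)}" s "{..<CARD('n)}"]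
  by (simp add: bij_betw_def)

lemma e_kk: "e (kk s) = s"
  unfolding kk_def using e by (simp add: f_the_inv_into_f_bij_betw)

lemma kk_inj: "inj kk"
  by (metis e_kk injI)

definition Qm :: "complex^'n^'n" where "Qm = (\<chi> r s. qq' (kk s) $ r)"
definition Rm :: "complex^'n^'n" where "Rm = adjm Qm ** x"

lemma Q_unit: "adjm Qm ** Qm = mat 1"
proof -
  have "(adjm Qm ** Qm) $ s $ t = (mat 1 :: complex^'n^'n) $ s $ t" for s t
  proof -
    have "(adjm Qm ** Qm) $ s $ t = hp (qq' (kk t)) (qq' (kk s))"
      unfolding adjm_def Qm_def matrix_matrix_mult_def hp_def by (simp add: mult.commute)
    also have "\<dots> = (if kk t = kk s then 1 else 0)" using kk_lt by (simp add: orth)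
    also have "\<dots> = (mat 1 :: complex^'n^'n) $ s $ t" using kk_inj unfolding mat_def inj_def by auto
    finally show ?thesis .
  qed
  then show ?thesis by (simp add: vec_eq_iff)
qed

lemma R_entry: "Rm $ s $ t = hp (cc x e (kk t)) (qq' (kk s))"
  unfolding Rm_def adjm_def Qm_def matrix_matrix_mult_def hp_def
  by (simp add: cc_def[OF xi e] e_kk mult.commute)

lemma QR: "x = Qm ** Rm"
proof -
  have "Qm ** adjm Qm = mat 1" using Q_unit matrix_left_right_inverse by blast
  then show ?thesis unfolding Rm_def by (simp add: matrix_mul_assoc)
qed

lemma R_tri: "kk t < kk s \<Longrightarrow> Rm $ s $ t = 0"
  by (simp add: R_entry hp_cq_lt kk_lt)

lemma R_diag: "1 \<le> cmod (Rm $ s $ s) * (real CARD('n) * norm xi)"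
proof -
  have "Rm $ s $ s = complex_of_real (norm (vv' (kk s)))" by (simp add: R_entry hp_cq_eq kk_lt)
  then have "cmod (Rm $ s $ s) = norm (vv' (kk s))" by simp
  moreover have "1 \<le> norm (vv' (kk s)) * (real CARD('n) * norm (xi $ s))"
    using vbound[OF kk_lt[of s]] by (simp add: e_kk)
  moreover have "norm (xi $ s) \<le> norm xi" by (rule Finite_Cartesian_Product.norm_nth_le)
  then have "real CARD('n) * norm (xi $ s) \<le> real CARD('n) * norm xi" by (simp add: mult_left_mono)
  ultimately show ?thesis
    by (metis (no_types, lifting) mult_left_mono norm_ge_zero order_trans)
qed

lemma R_bound: "cmod (Rm $ s $ t) \<le> real CARD('n) * norm x"
proof -
  have "Rm $ s $ t = (\<Sum>r\<in>UNIV. cnj (qq' (kk s) $ r) * x $ r $ t)"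
    unfolding Rm_def adjm_def Qm_def matrix_matrix_mult_def by simp
  then have "cmod (Rm $ s $ t) \<le> (\<Sum>r\<in>UNIV. cmod (cnj (qq' (kk s) $ r) * x $ r $ t))"
    by (simp add: norm_sum)
  also have "\<dots> \<le> (\<Sum>r\<in>(UNIV::'n set). norm x)"
  proof (intro sum_mono)
    fix r
    have "cmod (qq' (kk s) $ r) \<le> 1"
      using Finite_Cartesian_Product.norm_nth_le[of "qq' (kk s)" r] norm_q[OF kk_lt] by simp
    moreover have "cmod (x $ r $ t) \<le> norm x" by (rule entry_le_norm)
    ultimately have "cmod (qq' (kk s) $ r) * cmod (x $ r $ t) \<le> 1 * norm x"
      by (intro mult_mono) auto
    then show "cmod (cnj (qq' (kk s) $ r) * x $ r $ t) \<le> norm x"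
      by (simp add: norm_mult)
  qed
  also have "\<dots> = real CARD('n) * norm x" by simp
  finally show ?thesis .
qed

end

lemma QR_exists:
  fixes x :: "complex^'n^'n"
  assumes "invertible x"
  shows "\<exists>Q R k. adjm Q ** Q = mat 1 \<and> x = Q ** R \<and> inj k \<and> (\<forall>s. k s < CARD('n))
     \<and> (\<forall>s t. k t < k s \<longrightarrow> R$s$t = 0)
     \<and> (\<forall>s. 1 \<le> cmod (R$s$s) * (real CARD('n) * norm (matrix_inv x)))
     \<and> (\<forall>s t. cmod (R$s$t) \<le> real CARD('n) * norm x)"
proof -
  have xi: "matrix_inv x ** x = mat 1"
    using assms unfolding invertible_def matrix_inv_def by (rule someI2_ex) auto
  obtain e :: "nat \<Rightarrow> 'n" where e: "bij_betw e {..<CARD('n)} UNIV"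
    using ex_bij_betw_nat_finite[of "UNIV :: 'n set"] by (auto simp: atLeast0LessThan)
  show ?thesis
    apply (rule exI[of _ "Qm x e"], rule exI[of _ "Rm x e"], rule exI[of _ "kk e"])
    using Q_unit[OF xi e] QR[OF xi e] kk_inj[OF xi e] kk_lt[OF xi e] R_tri[OF xi e]
      R_diag[OF xi e] R_bound[OF xi e] by simp
qed


definition Uset :: "(complex^'n^'n) set" where "Uset = {Q. adjm Q ** Q = mat 1}"

lemma Uset_GL: "Uset \<subseteq> GL"
  unfolding Uset_def GL_def using invertible_left_inverse by blast

lemma Uset_entry: "Q \<in> Uset \<Longrightarrow> cmod (Q$r$s) \<le> 1"
proof -
  assume Q: "Q \<in> Uset"
  have "(adjm Q ** Q) $ s $ s = 1" using Q unfolding Uset_def by (simp add: mat_def)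
  then have "(\<Sum>r'\<in>UNIV. cnj (Q$r'$s) * Q$r'$s) = 1"
    unfolding adjm_def matrix_matrix_mult_def by simp
  moreover have "\<And>r'. cnj (Q$r'$s) * Q$r'$s = complex_of_real (cmod (Q$r'$s) ^ 2)"
    by (simp add: complex_norm_square mult.commute del: of_real_power)
  ultimately have "complex_of_real (\<Sum>r'\<in>UNIV. cmod (Q$r'$s) ^ 2) = 1" by simp
  then have s1: "(\<Sum>r'\<in>UNIV. cmod (Q$r'$s) ^ 2) = 1" by (metis of_real_eq_1_iff)
  have "cmod (Q$r$s) ^ 2 \<le> (\<Sum>r'\<in>UNIV. cmod (Q$r'$s) ^ 2)"
    by (rule member_le_sum) auto
  then have "cmod (Q$r$s) ^ 2 \<le> 1 ^ 2" using s1 by simp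
  then show ?thesis by (rule power2_le_imp_le) simp
qed

lemma Uset_bounded: "bounded (Uset :: (complex^'n^'n) set)"
proof -
  have "norm Q \<le> real CARD('n) * real CARD('n)" if Q: "Q \<in> (Uset :: (complex^'n^'n) set)" for Q
  proof -
    have "norm Q \<le> l1 Q" by (rule norm_le_l1)
    also have "\<dots> \<le> (\<Sum>i\<in>(UNIV::'n set). \<Sum>j\<in>(UNIV::'n set). 1)"
      unfolding l1_def using Uset_entry[OF Q] by (intro sum_mono) auto
    finally show ?thesis by simp
  qed
  then show ?thesis unfolding bounded_iff by blast
qed

lemma Uset_closed: "closed (Uset :: (complex^'n^'n) set)"
proof -
  have eq: "(Uset :: (complex^'n^'n) set) =
      {Q. \<forall>s. \<forall>t. (\<Sum>r\<in>UNIV. cnj (Q$r$s) * Q$r$t) = (mat 1 :: complex^'n^'n)$s$t}"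
    unfolding Uset_def adjm_def matrix_matrix_mult_def by (auto simp: vec_eq_iff)
  have comp: "continuous_on UNIV (\<lambda>Q::complex^'n^'n. Q$r$s)" for r s
    by (intro continuous_on_component continuous_on_id)
  have ccomp: "continuous_on UNIV (\<lambda>Q::complex^'n^'n. cnj (Q$r$s))" for r s
    using comp[of r s] unfolding continuous_on_def by (auto intro: tendsto_cnj)
  show ?thesis unfolding eq
  proof (intro closed_Collect_all closed_Collect_eq)
    fix s t
    show "continuous_on UNIV (\<lambda>Q::complex^'n^'n. \<Sum>r\<in>UNIV. cnj (Q$r$s) * Q$r$t)"
      by (intro continuous_on_sum continuous_on_mult ccomp comp)
    show "continuous_on UNIV (\<lambda>Q::complex^'n^'n. (mat 1 :: complex^'n^'n)$s$t)"
      by (rule continuous_on_const)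
  qed
qed

lemma Uset_compact: "compact (Uset :: (complex^'n^'n) set)"
  using Uset_bounded Uset_closed compact_eq_bounded_closed by blast


lemma dg_left: "(dg a ** M) $ s $ u = a s * M $ s $ u"
proof -
  have "(dg a ** M) $ s $ u = (\<Sum>m\<in>UNIV. (if s = m then a s else 0) * M $ m $ u)"
    unfolding dg_def matrix_matrix_mult_def by simp
  also have "\<dots> = (\<Sum>m\<in>UNIV. if m = s then a s * M $ s $ u else 0)" by (intro sum.cong) auto
  also have "\<dots> = a s * M $ s $ u" by simp
  finally show ?thesis .
qed

lemma dg_right: "(M ** dg b) $ s $ u = M $ s $ u * b u"
proof -
  have "(M ** dg b) $ s $ u = (\<Sum>m\<in>UNIV. M $ s $ m * (if m = u then b m else 0))"
    unfolding dg_def matrix_matrix_mult_def by simp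
  also have "\<dots> = (\<Sum>m\<in>UNIV. if m = u then M $ s $ u * b u else 0)" by (intro sum.cong) auto
  also have "\<dots> = M $ s $ u * b u" by simp
  finally show ?thesis .
qed

lemma pow_ratio: "(t::real) \<ge> 1 \<Longrightarrow> i < j \<Longrightarrow> t ^ i * (1 / t) ^ j \<le> 1 / t"
proof -
  assume t: "t \<ge> 1" and ij: "i < j"
  have "t ^ i * (1 / t) ^ j = (1 / t) ^ (j - i)"
    using t ij by (simp add: power_diff field_simps power_add[symmetric])
  also have "\<dots> \<le> (1 / t) ^ 1" using t ij by (intro power_decreasing) auto
  finally show ?thesis by simp
qed

context
  fixes f :: "complex^'n^'n \<Rightarrow> real"
  assumes sc: "semicharacter_GL f"
begin

lemma tri_bound:
  "\<exists>C N. C \<ge> 1 \<and> (\<forall>R K k. K \<ge> 1 \<longrightarrow> R \<in> GL \<longrightarrow> inj k \<longrightarrow> (\<forall>s. k s < CARD('n))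
     \<longrightarrow> (\<forall>s u. k u < k s \<longrightarrow> R$s$u = 0) \<longrightarrow> (\<forall>s. 1 \<le> cmod (R$s$s) * K)
     \<longrightarrow> (\<forall>s u. cmod (R$s$u) \<le> K) \<longrightarrow> f R \<le> C * K ^ N)"
proof -
  obtain C1 N1 where C1: "C1 \<ge> 1" and dgb: "\<And>d L. L \<ge> 1 \<Longrightarrow> (\<forall>i. d i \<noteq> 0 \<and> cmod (d i) \<le> L \<and> 1 \<le> L * cmod (d i))
        \<Longrightarrow> f (dg d) \<le> C1 * L ^ N1"
    using diag_bound[OF sc] by blast
  obtain e B where eB: "e > 0" "B \<ge> 1" "\<And>y. y \<in> GL \<Longrightarrow> l1 (y - mat 1) < e \<Longrightarrow> f y \<le> B"
    using near_id[OF sc] by blast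
  define n where "n = CARD('n)"
  define a where "a = real n ^ 2 / e + 1"
  have a1: "a \<ge> 1" unfolding a_def using eB(1) by simp
  define C where "C = C1 ^ 3 * B * a ^ (2 * n * N1)"
  define N where "N = 4 * n * N1 + N1"
  show ?thesis
  proof (intro exI[of _ C] exI[of _ N] conjI allI impI)
    have p1: "1 \<le> C1 ^ 3" "1 \<le> a ^ (2 * n * N1)" using C1 a1 by (simp_all add: one_le_power)
    have "1 * 1 * 1 \<le> C1 ^ 3 * B * a ^ (2 * n * N1)"
      using p1 eB(2) C1 by (intro mult_mono) auto
    then show "1 \<le> C" unfolding C_def by simp
    fix R :: "complex^'n^'n" and K :: real and k :: "'n \<Rightarrow> nat"
    assume K: "1 \<le> K" and RGL: "R \<in> GL" and kinj: "inj k" and kn: "\<forall>s. k s < CARD('n)"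
      and tri: "\<forall>s u. k u < k s \<longrightarrow> R$s$u = 0" and dia: "\<forall>s. 1 \<le> cmod (R$s$s) * K"
      and ent: "\<forall>s u. cmod (R$s$u) \<le> K"
    have rnz: "R$s$s \<noteq> 0" for s using dia[rule_format, of s] by auto
    define t where "t = real n ^ 2 * K ^ 2 / e + 1"
    have t1: "t \<ge> 1" unfolding t_def using eB(1) by simp
    have tpos: "t > 0" using t1 by simp
    have tle: "t \<le> a * K ^ 2"
    proof -
      have "real n ^ 2 * K ^ 2 / e + 1 \<le> real n ^ 2 * K ^ 2 / e + K ^ 2"
        using K by (simp add: one_le_power)
      also have "\<dots> = a * K ^ 2" unfolding a_def by (simp add: field_simps)
      finally show ?thesis unfolding t_def .
    qed
    define ad where "ad s = complex_of_real (t ^ k s) / R$s$s" for s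
    define bd where "bd u = complex_of_real ((1 / t) ^ k u)" for u
    define P where "P = dg ad ** R ** dg bd"
    define Ti where "Ti = dg (\<lambda>s. complex_of_real ((1 / t) ^ k s))"
    define D where "D = dg (\<lambda>s. R$s$s)"
    define T where "T = dg (\<lambda>s. complex_of_real (t ^ k s))"
    have Ti_D: "Ti ** D ** dg ad = mat 1"
    proof -
      have "Ti ** D ** dg ad = dg (\<lambda>s. complex_of_real ((1 / t) ^ k s) * R$s$s * ad s)"
        unfolding Ti_def D_def by (simp add: dg_mult)
      also have "(\<lambda>s. complex_of_real ((1 / t) ^ k s) * R$s$s * ad s) = (\<lambda>_. 1)"
      proof
        fix s
        have "complex_of_real ((1 / t) ^ k s) * complex_of_real (t ^ k s) = 1"
          using tpos by (simp add: power_one_over flip: of_real_mult)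
        then show "complex_of_real ((1 / t) ^ k s) * R$s$s * ad s = 1"
          unfolding ad_def using rnz[of s] tpos by (simp add: field_simps)
      qed
      finally show ?thesis by (simp add: dg_one)
    qed
    have bd_T: "dg bd ** T = mat 1"
    proof -
      have "dg bd ** T = dg (\<lambda>s. complex_of_real ((1 / t) ^ k s) * complex_of_real (t ^ k s))"
        unfolding bd_def T_def by (simp add: dg_mult)
      also have "(\<lambda>s. complex_of_real ((1 / t) ^ k s) * complex_of_real (t ^ k s)) = (\<lambda>_. 1)"
        using tpos by (simp add: power_one_over flip: of_real_mult)
      finally show ?thesis by (simp add: dg_one)
    qed
    have Rdec: "R = Ti ** D ** P ** T"
    proof -
      have "Ti ** D ** P ** T = (Ti ** D ** dg ad) ** R ** (dg bd ** T)"
        unfolding P_def by (simp add: matrix_mul_assoc)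
      also have "\<dots> = R" using Ti_D bd_T by simp
      finally show ?thesis by simp
    qed
    have TiGL: "Ti \<in> GL" unfolding Ti_def using tpos by (intro dg_GL) simp
    have DGL: "D \<in> GL" unfolding D_def using rnz by (intro dg_GL) simp
    have TGL: "T \<in> GL" unfolding T_def using tpos by (intro dg_GL) simp
    have PGL: "P \<in> GL" unfolding P_def ad_def bd_def using tpos rnz RGL
      by (intro GL_mult dg_GL) auto
    have Pent: "cmod ((P - mat 1) $ s $ u) \<le> K ^ 2 / t" for s u
    proof -
      have Psu: "P $ s $ u = ad s * R $ s $ u * bd u" unfolding P_def by (simp add: dg_left dg_right)
      show ?thesis
      proof (cases "s = u")
        case True
        have "ad s * R $ s $ s * bd s = 1"
        proof -
          have "complex_of_real ((1 / t) ^ k s) * complex_of_real (t ^ k s) = 1"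
            using tpos by (simp add: power_one_over flip: of_real_mult)
          then show ?thesis unfolding ad_def bd_def using rnz[of s] tpos by (simp add: field_simps)
        qed
        then show ?thesis using True Psu t1 by (simp add: mat_def)
      next
        case False
        then have ne: "k s \<noteq> k u" using kinj unfolding inj_def by blast
        have m0: "(mat 1 :: complex^'n^'n) $ s $ u = 0" using False by (simp add: mat_def)
        show ?thesis
        proof (cases "k u < k s")
          case True
          then show ?thesis using tri Psu m0 t1 by simp
        next
          case False
          then have lt: "k s < k u" using ne by simp
          have ids: "1 / cmod (R$s$s) \<le> K" using dia[rule_format, of s] rnz[of s]
            by (simp add: field_simps)
          have "cmod (P $ s $ u) = t ^ k s / cmod (R$s$s) * cmod (R$s$u) * (1 / t) ^ k u"
            unfolding Psu ad_def bd_def using tpos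
            by (simp add: norm_mult norm_divide norm_power)
          also have "\<dots> = (1 / cmod (R$s$s)) * cmod (R$s$u) * (t ^ k s * (1 / t) ^ k u)"
            by (simp add: field_simps)
          also have "\<dots> \<le> K * K * (1 / t)"
            using ids ent pow_ratio[OF t1 lt] tpos K
            by (intro mult_mono) (auto simp: zero_le_mult_iff)
          also have "\<dots> = K ^ 2 / t" by (simp add: power2_eq_square)
          finally show ?thesis using m0 by simp
        qed
      qed
    qed
    have "l1 (P - mat 1) \<le> (\<Sum>s\<in>(UNIV::'n set). \<Sum>u\<in>(UNIV::'n set). K ^ 2 / t)"
      unfolding l1_def using Pent by (intro sum_mono) auto
    also have "\<dots> = real n ^ 2 * K ^ 2 / t" unfolding n_def by (simp add: power2_eq_square)
    also have "\<dots> < e"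
    proof -
      have "real n ^ 2 * K ^ 2 < e * t" unfolding t_def using eB(1) by (simp add: field_simps)
      then show ?thesis using tpos by (simp add: field_simps)
    qed
    finally have fP: "f P \<le> B" using eB(3) PGL by blast
    have tn1: "1 \<le> t ^ n" using t1 by (simp add: one_le_power)
    have tk: "t ^ k s \<le> t ^ n" for s using t1 kn unfolding n_def by (intro power_increasing) (auto simp: less_imp_le)
    have fT: "f T \<le> C1 * (t ^ n) ^ N1"
      unfolding T_def
    proof (rule dgb[OF tn1], intro allI conjI)
      fix s
      show "complex_of_real (t ^ k s) \<noteq> 0" using tpos by simp
      have cm: "cmod (complex_of_real (t ^ k s)) = t ^ k s"
        using tpos by (simp only: norm_of_real) simp
      show "cmod (complex_of_real (t ^ k s)) \<le> t ^ n" using tk[of s] cm by simp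
      have "1 \<le> t ^ k s" using t1 by (simp add: one_le_power)
      then have "1 * 1 \<le> t ^ n * t ^ k s" using tn1 by (intro mult_mono) auto
      then show "1 \<le> t ^ n * cmod (complex_of_real (t ^ k s))" using cm by simp
    qed
    have fTi: "f Ti \<le> C1 * (t ^ n) ^ N1"
      unfolding Ti_def
    proof (rule dgb[OF tn1], intro allI conjI)
      fix s
      show "complex_of_real ((1 / t) ^ k s) \<noteq> 0" using tpos by simp
      have "(1 / t) ^ k s \<le> 1" using t1 by (intro power_le_one) auto
      have cm: "cmod (complex_of_real ((1 / t) ^ k s)) = (1 / t) ^ k s"
        using tpos by (simp only: norm_of_real) simp
      then show "cmod (complex_of_real ((1 / t) ^ k s)) \<le> t ^ n" using tn1 \<open>(1 / t) ^ k s \<le> 1\<close> by simp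
      have "t ^ n * (1 / t) ^ k s = t ^ n / t ^ k s" by (simp add: power_one_over)
      also have "\<dots> \<ge> 1" using tk[of s] tpos by simp
      finally show "1 \<le> t ^ n * cmod (complex_of_real ((1 / t) ^ k s))" using cm by simp
    qed
    have fD: "f D \<le> C1 * K ^ N1"
      unfolding D_def
    proof (rule dgb[OF K], intro allI conjI)
      fix s
      show "R$s$s \<noteq> 0" by (rule rnz)
      show "cmod (R$s$s) \<le> K" using ent by blast
      show "1 \<le> K * cmod (R$s$s)" using dia by (simp add: mult.commute)
    qed
    have tnN: "(t ^ n) ^ N1 \<le> a ^ (n * N1) * K ^ (2 * n * N1)"
    proof -
      have "(t ^ n) ^ N1 \<le> ((a * K ^ 2) ^ n) ^ N1" using tle tpos by (intro power_mono) auto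
      also have "\<dots> = a ^ (n * N1) * K ^ (2 * n * N1)"
        by (simp add: power_mult_distrib power_mult[symmetric] mult.commute mult.left_commute)
      finally show ?thesis .
    qed
    have f0: "0 \<le> f Ti" "0 \<le> f D" "0 \<le> f P" "0 \<le> f T"
      using f_ge1[OF sc TiGL] f_ge1[OF sc DGL] f_ge1[OF sc PGL] f_ge1[OF sc TGL] by auto
    have "f R = f (Ti ** D ** P ** T)" using Rdec by simp
    also have "\<dots> \<le> f (Ti ** D ** P) * f T" using TiGL DGL PGL TGL by (intro f_mult[OF sc] GL_mult)
    also have "\<dots> \<le> (f Ti * f D * f P) * f T"
      using f_mult3[OF sc TiGL DGL PGL] f0 by (intro mult_right_mono) auto
    also have "\<dots> \<le> (C1 * (t ^ n) ^ N1) * (C1 * K ^ N1) * B * (C1 * (t ^ n) ^ N1)"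
      using fTi fD fP fT f0 by (intro mult_mono) (auto intro: mult_nonneg_nonneg)
    also have "\<dots> = C1 ^ 3 * B * ((t ^ n) ^ N1) ^ 2 * K ^ N1"
      by (simp add: power2_eq_square power3_eq_cube algebra_simps)
    also have "\<dots> \<le> C1 ^ 3 * B * (a ^ (n * N1) * K ^ (2 * n * N1)) ^ 2 * K ^ N1"
      using tnN C1 eB(2) K tpos
      by (intro mult_right_mono mult_left_mono power_mono) auto
    also have "\<dots> = C * K ^ N"
      unfolding C_def N_def by (simp add: power_mult_distrib power_add power_mult[symmetric] algebra_simps)
    finally show "f R \<le> C * K ^ N" .
  qed
qed

end


theorem mainTheorem5:
  fixes nrm :: "complex^'n^'n \<Rightarrow> real" and f :: "complex^'n^'n \<Rightarrow> real"
  assumes "submult_matrix_norm nrm"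
    and "semicharacter_GL f"
  shows "\<exists>C\<ge>1. \<exists>N::nat. \<forall>x\<in>GL. f x \<le> r_fun nrm C N x"
proof -
  note sm = assms(1) and sc = assms(2)
  obtain C N where C: "C \<ge> 1" and tbA: "\<forall>R K k. K \<ge> 1 \<longrightarrow> R \<in> GL \<longrightarrow> inj k \<longrightarrow> (\<forall>s. k s < CARD('n))
     \<longrightarrow> (\<forall>s u. k u < k s \<longrightarrow> R$s$u = 0) \<longrightarrow> (\<forall>s. 1 \<le> cmod (R$s$s) * K)
     \<longrightarrow> (\<forall>s u. cmod (R$s$u) \<le> K) \<longrightarrow> f R \<le> C * K ^ N"
    using tri_bound[OF sc] by (elim exE conjE) (rule that)
  obtain BU where BU: "\<And>Q. Q \<in> Uset \<Longrightarrow> f Q \<le> BU"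
    using compact_bound[OF sc Uset_compact Uset_GL] by blast
  obtain c where c: "c > 0" "\<And>x. norm x \<le> c * nrm x" using norm_le_nrm[OF sm] by blast
  define n where "n = real CARD('n)"
  have n0: "n \<ge> 0" unfolding n_def by simp
  define Cf where "Cf = max 1 (BU * C * (n * c + 1) ^ N)"
  have nI: "1 \<le> nrm (mat 1 :: complex^'n^'n)"
  proof -
    have "nrm (mat 1 :: complex^'n^'n) \<le> nrm (mat 1 :: complex^'n^'n) * nrm (mat 1 :: complex^'n^'n)"
      using nrm_mult[OF sm, of "mat 1" "mat 1"] by simp
    moreover have "nrm (mat 1 :: complex^'n^'n) > 0"
    proof -
      have "(mat 1 :: complex^'n^'n) \<noteq> 0"
      proof
        assume "(mat 1 :: complex^'n^'n) = 0"
        then have "(mat 1 :: complex^'n^'n) $ undefined $ undefined = 0" by simp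
        then show False by (simp add: mat_def)
      qed
      then have "nrm (mat 1 :: complex^'n^'n) \<noteq> 0" using nrm_eq0[OF sm] by blast
      then show ?thesis using nrm_nonneg[OF sm, of "mat 1"] by linarith
    qed
    ultimately show ?thesis by simp
  qed
  show ?thesis
  proof (intro exI[of _ Cf] conjI exI[of _ N] ballI)
    show "1 \<le> Cf" unfolding Cf_def by simp
    fix x :: "complex^'n^'n" assume xGL: "x \<in> GL"
    then have inv: "invertible x" unfolding GL_def by simp
    define xi where "xi = matrix_inv x"
    have xxi: "x ** xi = mat 1" and xix: "xi ** x = mat 1"
      using inv unfolding invertible_def matrix_inv_def xi_def by (auto intro: someI2_ex)
    define M where "M = max (nrm x) (nrm xi)"
    have M0: "M \<ge> 0" unfolding M_def using nrm_nonneg[OF sm, of x] by simp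
    have "1 \<le> nrm (x ** xi)" using nI xxi by simp
    also have "\<dots> \<le> nrm x * nrm xi" by (rule nrm_mult[OF sm])
    also have "\<dots> \<le> M * M" unfolding M_def using nrm_nonneg[OF sm, of x] nrm_nonneg[OF sm, of xi]
      by (intro mult_mono) auto
    finally have "1 \<le> M * M" .
    have M1: "M \<ge> 1"
    proof (rule ccontr)
      assume "\<not> 1 \<le> M"
      then have "M * M \<le> M * 1" using M0 by (intro mult_left_mono) auto
      then show False using \<open>1 \<le> M * M\<close> \<open>\<not> 1 \<le> M\<close> by simp
    qed
    obtain Q R k where QR: "adjm Q ** Q = mat 1" "x = Q ** R" "inj k" "\<forall>s. k s < CARD('n)"
      "\<forall>s t. k t < k s \<longrightarrow> R$s$t = 0"
      "\<forall>s. 1 \<le> cmod (R$s$s) * (real CARD('n) * norm (matrix_inv x))"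
      "\<forall>s t. cmod (R$s$t) \<le> real CARD('n) * norm x"
      using QR_exists[OF inv] by blast
    have QU: "Q \<in> Uset" unfolding Uset_def using QR(1) by simp
    have QGL: "Q \<in> GL" using QU Uset_GL by blast
    have "Q ** adjm Q = mat 1" using QR(1) matrix_left_right_inverse by blast
    then have aGL: "adjm Q \<in> GL" unfolding GL_def using invertible_left_inverse by blast
    have "R = adjm Q ** x" using QR(1,2) by (simp add: matrix_mul_assoc)
    then have RGL: "R \<in> GL" using aGL xGL by (simp add: GL_mult)
    define K where "K = n * c * M + 1"
    have K1: "K \<ge> 1" unfolding K_def using n0 c(1) M0 by simp
    have nx: "n * norm x \<le> K"
    proof -
      have "c * nrm x \<le> c * M" unfolding M_def using c(1) by (intro mult_left_mono) auto
      then have "norm x \<le> c * M" using c(2)[of x] by linarith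
      then have "n * norm x \<le> n * (c * M)" using n0 by (simp add: mult_left_mono)
      then show ?thesis unfolding K_def by simp
    qed
    have nxi: "n * norm xi \<le> K"
    proof -
      have "c * nrm xi \<le> c * M" unfolding M_def using c(1) by (intro mult_left_mono) auto
      then have "norm xi \<le> c * M" using c(2)[of xi] by linarith
      then have "n * norm xi \<le> n * (c * M)" using n0 by (simp add: mult_left_mono)
      then show ?thesis unfolding K_def by simp
    qed
    have dia: "\<forall>s. 1 \<le> cmod (R$s$s) * K"
    proof
      fix s
      have "1 \<le> cmod (R$s$s) * (n * norm xi)" using QR(6) unfolding n_def xi_def by blast
      also have "\<dots> \<le> cmod (R$s$s) * K" using nxi by (intro mult_left_mono) auto
      finally show "1 \<le> cmod (R$s$s) * K" .
    qed
    have ent: "\<forall>s u. cmod (R$s$u) \<le> K"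
    proof (intro allI)
      fix s u show "cmod (R$s$u) \<le> K" using QR(7) nx unfolding n_def by (meson order_trans)
    qed
    have fR: "f R \<le> C * K ^ N" using tbA K1 RGL QR(3) QR(4) QR(5) dia ent by blast
    have fQ: "f Q \<le> BU" using BU QU by blast
    have fR0: "0 \<le> f R" using f_ge1[OF sc RGL] by simp
    have BU0: "0 \<le> BU" using fQ f_ge1[OF sc QGL] by simp
    have "f x = f (Q ** R)" using QR(2) by simp
    also have "\<dots> \<le> f Q * f R" by (rule f_mult[OF sc QGL RGL])
    also have "\<dots> \<le> BU * (C * K ^ N)" using fQ fR fR0 BU0 by (intro mult_mono) auto
    also have "\<dots> \<le> BU * (C * ((n * c + 1) * M) ^ N)"
    proof -
      have "K \<le> (n * c + 1) * M" unfolding K_def using M1 n0 c(1) by (simp add: algebra_simps)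
      then have "K ^ N \<le> ((n * c + 1) * M) ^ N" using K1 by (intro power_mono) auto
      then show ?thesis using BU0 C by (intro mult_left_mono) auto
    qed
    also have "\<dots> = (BU * C * (n * c + 1) ^ N) * M ^ N" by (simp add: power_mult_distrib)
    also have "\<dots> \<le> Cf * M ^ N" unfolding Cf_def using M0 by (intro mult_right_mono) auto
    also have "\<dots> = r_fun nrm Cf N x" unfolding r_fun_def M_def xi_def by simp
    finally show "f x \<le> r_fun nrm Cf N x" .
  qed
qed


end
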